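(* For any ultrafilter $x\in I$, there exists a sequence $\langle x_n:n\in\mathbb{N}\rangle$ of ultrafilters with $x_n\in\overline{L_n}$ for each $n$, such that $x_1\,\tilde{\mid}\,x_2\,\tilde{\mid}\,\cdots$ and $x_n\,\tilde{\mid}\,x$ for every $n$.
   Context: $\mathbb{N}=\{1,2,3,\dots\}$; $\beta\mathbb{N}$ is the set of ultrafilters on $\mathbb{N}$. For $A\subseteq\mathbb{N}$, $\overline{A}=\{x\in\beta\mathbb{N}:A\in x\}$. $P$ is the set of primes, $L_0=\{1\}$, $L_n=\{a_1\cdots a_n:a_i\in P\}$. $I=\bigcap_{i=0}^\infty\overline{\mathbb{N}\setminus L_i}$ (ultrafilters containing none of the $L_i$). For $x,y\in\beta\mathbb{N}$, $x\,\tilde{\mid}\,y$ iff for every $A\in x$ the set $\{k\in\mathbb{N}:\exists a\in A,\ a\mid k\}$ belongs to $y$. *)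

theory Defs
  imports "HOL-Computational_Algebra.Primes"
begin

definition Npos :: "nat set" where
  "Npos = {n. n \<ge> 1}"

text \<open>Ultrafilters on N (points of beta N), represented as sets of subsets of Npos.\<close>
definition ultrafilter_N :: "nat set set \<Rightarrow> bool" where
  "ultrafilter_N x \<longleftrightarrow>
     (\<forall>A\<in>x. A \<subseteq> Npos) \<and> Npos \<in> x \<and> {} \<notin> x \<and>
     (\<forall>A B. A \<in> x \<and> B \<in> x \<longrightarrow> A \<inter> B \<in> x) \<and>
     (\<forall>A B. A \<in> x \<and> A \<subseteq> B \<and> B \<subseteq> Npos \<longrightarrow> B \<in> x) \<and>
     (\<forall>A. A \<subseteq> Npos \<longrightarrow> A \<in> x \<or> Npos - A \<in> x)"

definition L :: "nat \<Rightarrow> nat set" where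
  "L n = {k. \<exists>ps. length ps = n \<and> (\<forall>p\<in>set ps. prime p) \<and> k = prod_list ps}"

text \<open>The set I: ultrafilters containing none of the L i, i.e. lying in every closure of N - L i.\<close>
definition I_set :: "nat set set set" where
  "I_set = {x. ultrafilter_N x \<and> (\<forall>i. Npos - L i \<in> x)}"

definition tdvd :: "nat set set \<Rightarrow> nat set set \<Rightarrow> bool" where
  "tdvd x y \<longleftrightarrow> (\<forall>A\<in>x. {k \<in> Npos. \<exists>a\<in>A. a dvd k} \<in> y)"

end

theory Submission
  imports Defs
begin

definition pl :: "nat \<Rightarrow> nat list" where
  "pl k = sorted_list_of_multiset (prime_factorization k)"

definition fn :: "nat \<Rightarrow> nat \<Rightarrow> nat" where
  "fn n k = (if n \<le> length (pl k) then prod_list (take n (pl k)) else 2 ^ n)"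

lemma pl_primes: "p \<in> set (pl k) \<Longrightarrow> prime p"
  unfolding pl_def by (auto intro: in_prime_factors_imp_prime)

lemma pl_prod: "k > 0 \<Longrightarrow> prod_list (pl k) = k"
  unfolding pl_def by (metis prod_mset_prod_list mset_sorted_list_of_multiset prod_mset_prime_factorization_nat)

lemma L_pos: "k \<in> L n \<Longrightarrow> k \<in> Npos"
proof -
  assume "k \<in> L n"
  then obtain ps where ps: "\<forall>p\<in>set ps. prime p" "k = prod_list ps" unfolding L_def by auto
  have "0 \<notin> set ps" using ps(1) by auto
  then have "prod_list ps \<noteq> 0" by (simp add: prod_list_zero_iff)
  then show ?thesis using ps(2) by (simp add: Npos_def)
qed

lemma L_len: "k \<in> L i \<Longrightarrow> length (pl k) = i"
proof -
  assume "k \<in> L i"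
  then obtain ps where ps: "length ps = i" "\<forall>p\<in>set ps. prime p" "k = prod_list ps" unfolding L_def by auto
  have "prime_factorization (prod_mset (mset ps)) = mset ps"
    by (rule prime_factorization_prod_mset_primes) (use ps(2) in auto)
  then have pf: "prime_factorization k = mset ps"
    using ps(3) by (simp add: prod_mset_prod_list)
  have "length (pl k) = size (mset (pl k))" by simp
  also have "\<dots> = size (prime_factorization k)" unfolding pl_def by simp
  also have "\<dots> = length ps" using pf by simp
  finally show ?thesis using ps(1) by simp
qed

lemma pl_L: "k > 0 \<Longrightarrow> k \<in> L (length (pl k))"
  unfolding L_def using pl_primes pl_prod by auto

lemma fn_L: "fn n k \<in> L n"
proof (cases "n \<le> length (pl k)")
  case True
  then show ?thesis unfolding fn_def L_def
    by (auto intro!: exI[of _ "take n (pl k)"] dest: in_set_takeD pl_primes)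
next
  case False
  then show ?thesis unfolding fn_def L_def
    by (auto intro!: exI[of _ "replicate n 2"] simp: prod_list_replicate)
qed

lemma fn_pos: "fn n k \<in> Npos" by (rule L_pos[OF fn_L])

lemma fn_dvd: "n \<le> length (pl k) \<Longrightarrow> k > 0 \<Longrightarrow> fn n k dvd k"
proof -
  assume a: "n \<le> length (pl k)" "k > 0"
  have "prod_list (pl k) = prod_list (take n (pl k)) * prod_list (drop n (pl k))"
    by (metis append_take_drop_id prod_list.append)
  then have "prod_list (take n (pl k)) dvd k" using a pl_prod[of k] by (metis dvd_triv_left)
  then show ?thesis using a unfolding fn_def by simp
qed

lemma fn_chain: "Suc n \<le> length (pl k) \<Longrightarrow> fn n k dvd fn (Suc n) k"
proof -
  assume a: "Suc n \<le> length (pl k)"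
  then have "take (Suc n) (pl k) = take n (pl k) @ [pl k ! n]"
    by (simp add: take_Suc_conv_app_nth)
  then show ?thesis using a unfolding fn_def by simp
qed

definition img :: "nat \<Rightarrow> nat set set \<Rightarrow> nat set set" where
  "img n x = {A. A \<subseteq> Npos \<and> {k \<in> Npos. fn n k \<in> A} \<in> x}"

lemma uf_super_all: "ultrafilter_N x \<Longrightarrow> \<forall>A B. A \<in> x \<and> A \<subseteq> B \<and> B \<subseteq> Npos \<longrightarrow> B \<in> x"
  unfolding ultrafilter_N_def by (elim conjE) assumption

lemma uf_int_all: "ultrafilter_N x \<Longrightarrow> \<forall>A B. A \<in> x \<and> B \<in> x \<longrightarrow> A \<inter> B \<in> x"
  unfolding ultrafilter_N_def by (elim conjE) assumption

lemma uf_compl_all: "ultrafilter_N x \<Longrightarrow> \<forall>A. A \<subseteq> Npos \<longrightarrow> A \<in> x \<or> Npos - A \<in> x"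
  unfolding ultrafilter_N_def by (elim conjE) assumption

lemma uf_N: "ultrafilter_N x \<Longrightarrow> Npos \<in> x"
  unfolding ultrafilter_N_def by (elim conjE) assumption

lemma uf_empty: "ultrafilter_N x \<Longrightarrow> {} \<notin> x"
  unfolding ultrafilter_N_def by (elim conjE) assumption

lemma uf_super: "ultrafilter_N x \<Longrightarrow> A \<in> x \<Longrightarrow> A \<subseteq> B \<Longrightarrow> B \<subseteq> Npos \<Longrightarrow> B \<in> x"
  using uf_super_all by blast

lemma uf_int: "ultrafilter_N x \<Longrightarrow> A \<in> x \<Longrightarrow> B \<in> x \<Longrightarrow> A \<inter> B \<in> x"
  using uf_int_all by blast

lemma uf_compl: "ultrafilter_N x \<Longrightarrow> A \<subseteq> Npos \<Longrightarrow> A \<in> x \<or> Npos - A \<in> x"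
  using uf_compl_all by blast

lemma uf_intro:
  assumes "\<And>A. A \<in> x \<Longrightarrow> A \<subseteq> Npos" "Npos \<in> x" "{} \<notin> x"
    "\<And>A B. A \<in> x \<Longrightarrow> B \<in> x \<Longrightarrow> A \<inter> B \<in> x"
    "\<And>A B. A \<in> x \<Longrightarrow> A \<subseteq> B \<Longrightarrow> B \<subseteq> Npos \<Longrightarrow> B \<in> x"
    "\<And>A. A \<subseteq> Npos \<Longrightarrow> A \<in> x \<or> Npos - A \<in> x"
  shows "ultrafilter_N x"
  unfolding ultrafilter_N_def
proof (intro conjI allI impI ballI)
  fix A assume "A \<in> x" then show "A \<subseteq> Npos" by (rule assms(1))
next
  show "Npos \<in> x" by (rule assms(2))
next
  show "{} \<notin> x" by (rule assms(3))
next
  fix A B assume "A \<in> x \<and> B \<in> x" then show "A \<inter> B \<in> x" using assms(4) by simp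
next
  fix A B assume "A \<in> x \<and> A \<subseteq> B \<and> B \<subseteq> Npos" then show "B \<in> x" using assms(5) by blast
next
  fix A assume "A \<subseteq> Npos" then show "A \<in> x \<or> Npos - A \<in> x" by (rule assms(6))
qed

lemma img_uf:
  assumes u: "ultrafilter_N x"
  shows "ultrafilter_N (img n x)"
proof (rule uf_intro)
  fix A assume "A \<in> img n x" then show "A \<subseteq> Npos" unfolding img_def by simp
next
  have "{k \<in> Npos. fn n k \<in> Npos} = Npos" using fn_pos by auto
  then show "Npos \<in> img n x" unfolding img_def using uf_N[OF u] by simp
next
  show "{} \<notin> img n x" unfolding img_def using uf_empty[OF u] by simp
next
  fix A B assume a: "A \<in> img n x" "B \<in> img n x"
  have "{k \<in> Npos. fn n k \<in> A \<inter> B} = {k \<in> Npos. fn n k \<in> A} \<inter> {k \<in> Npos. fn n k \<in> B}"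
    by auto
  moreover have "{k \<in> Npos. fn n k \<in> A} \<inter> {k \<in> Npos. fn n k \<in> B} \<in> x"
    using a unfolding img_def by (intro uf_int[OF u]) auto
  moreover have "A \<inter> B \<subseteq> Npos" using a unfolding img_def by auto
  ultimately show "A \<inter> B \<in> img n x" unfolding img_def by simp
next
  fix A B assume a: "A \<in> img n x" "A \<subseteq> B" "B \<subseteq> Npos"
  have "{k \<in> Npos. fn n k \<in> B} \<in> x"
  proof (rule uf_super[OF u])
    show "{k \<in> Npos. fn n k \<in> A} \<in> x" using a(1) unfolding img_def by simp
    show "{k \<in> Npos. fn n k \<in> A} \<subseteq> {k \<in> Npos. fn n k \<in> B}" using a(2) by auto
    show "{k \<in> Npos. fn n k \<in> B} \<subseteq> Npos" by auto
  qed
  then show "B \<in> img n x" unfolding img_def using a(3) by simp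
next
  fix A :: "nat set" assume A: "A \<subseteq> Npos"
  have pc: "{k \<in> Npos. fn n k \<in> Npos - A} = Npos - {k \<in> Npos. fn n k \<in> A}"
    using fn_pos by auto
  have "{k \<in> Npos. fn n k \<in> A} \<in> x \<or> Npos - {k \<in> Npos. fn n k \<in> A} \<in> x"
    by (rule uf_compl[OF u]) auto
  then show "A \<in> img n x \<or> Npos - A \<in> img n x"
    unfolding img_def using A pc by auto
qed

lemma S_in:
  assumes "x \<in> I_set"
  shows "{k \<in> Npos. n \<le> length (pl k)} \<in> x"
proof -
  have u: "ultrafilter_N x" using assms unfolding I_set_def by auto
  have "{k \<in> Npos. \<forall>i<n. k \<notin> L i} \<in> x" for n
  proof (induction n)
    case 0
    then show ?case using u unfolding ultrafilter_N_def by simp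
  next
    case (Suc n)
    have eq: "{k \<in> Npos. \<forall>i<Suc n. k \<notin> L i} = {k \<in> Npos. \<forall>i<n. k \<notin> L i} \<inter> (Npos - L n)"
      by (auto simp: less_Suc_eq)
    have "Npos - L n \<in> x" using assms unfolding I_set_def by blast
    from uf_int[OF u Suc this] show ?case unfolding eq .
  qed
  moreover have "{k \<in> Npos. \<forall>i<n. k \<notin> L i} \<subseteq> {k \<in> Npos. n \<le> length (pl k)}"
  proof
    fix k assume "k \<in> {k \<in> Npos. \<forall>i<n. k \<notin> L i}"
    then have k: "k \<in> Npos" "\<And>i. i < n \<Longrightarrow> k \<notin> L i" by auto
    then have "k > 0" by (auto simp: Npos_def)
    then have "k \<in> L (length (pl k))" by (rule pl_L)
    then have "\<not> length (pl k) < n" using k(2) by blast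
    then show "k \<in> {k \<in> Npos. n \<le> length (pl k)}" using k(1) by simp
  qed
  ultimately show ?thesis using uf_super[OF u] by blast
qed

theorem corollary3p6:
  assumes "x \<in> I_set"
  shows "\<exists>xs :: nat \<Rightarrow> nat set set.
           (\<forall>n\<ge>1. ultrafilter_N (xs n) \<and> L n \<in> xs n) \<and>
           (\<forall>n\<ge>1. tdvd (xs n) (xs (Suc n))) \<and>
           (\<forall>n\<ge>1. tdvd (xs n) x)"
proof (intro exI[of _ "\<lambda>n. img n x"] conjI allI impI)
  have u: "ultrafilter_N x" using assms unfolding I_set_def by auto
  fix n :: nat
  show "ultrafilter_N (img n x)" using img_uf[OF u] .
  have "{k \<in> Npos. fn n k \<in> L n} = Npos" using fn_L by auto
  moreover have "Npos \<in> x" using u unfolding ultrafilter_N_def by blast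
  moreover have "L n \<subseteq> Npos" using L_pos by blast
  ultimately show "L n \<in> img n x" unfolding img_def by simp
  show "tdvd (img n x) (img (Suc n) x)" unfolding tdvd_def
  proof
    fix A assume "A \<in> img n x"
    then have P: "{k \<in> Npos. fn n k \<in> A} \<in> x" unfolding img_def by auto
    have "{k \<in> Npos. fn n k \<in> A} \<inter> {k \<in> Npos. Suc n \<le> length (pl k)}
          \<subseteq> {k \<in> Npos. fn (Suc n) k \<in> {k \<in> Npos. \<exists>a\<in>A. a dvd k}}"
    proof
      fix k assume "k \<in> {k \<in> Npos. fn n k \<in> A} \<inter> {k \<in> Npos. Suc n \<le> length (pl k)}"
      then have k: "k \<in> Npos" "fn n k \<in> A" "Suc n \<le> length (pl k)" by auto
      have "fn n k dvd fn (Suc n) k" using k(3) by (rule fn_chain)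
      then have "fn (Suc n) k \<in> {k \<in> Npos. \<exists>a\<in>A. a dvd k}" using k(2) fn_pos[of "Suc n" k] by blast
      then show "k \<in> {k \<in> Npos. fn (Suc n) k \<in> {k \<in> Npos. \<exists>a\<in>A. a dvd k}}" using k(1) by simp
    qed
    then have "{k \<in> Npos. fn (Suc n) k \<in> {k \<in> Npos. \<exists>a\<in>A. a dvd k}} \<in> x"
      by (rule uf_super[OF u uf_int[OF u P S_in[OF assms]]]) auto
    then show "{k \<in> Npos. \<exists>a\<in>A. a dvd k} \<in> img (Suc n) x" unfolding img_def by auto
  qed
  show "tdvd (img n x) x" unfolding tdvd_def
  proof
    fix A assume "A \<in> img n x"
    then have P: "{k \<in> Npos. fn n k \<in> A} \<in> x" unfolding img_def by auto
    have "{k \<in> Npos. fn n k \<in> A} \<inter> {k \<in> Npos. n \<le> length (pl k)}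
          \<subseteq> {k \<in> Npos. \<exists>a\<in>A. a dvd k}"
    proof
      fix k assume "k \<in> {k \<in> Npos. fn n k \<in> A} \<inter> {k \<in> Npos. n \<le> length (pl k)}"
      then have k: "k \<in> Npos" "fn n k \<in> A" "n \<le> length (pl k)" by auto
      have "fn n k dvd k" using k(3) k(1) by (intro fn_dvd) (auto simp: Npos_def)
      then show "k \<in> {k \<in> Npos. \<exists>a\<in>A. a dvd k}" using k(1,2) by blast
    qed
    then show "{k \<in> Npos. \<exists>a\<in>A. a dvd k} \<in> x"
      by (rule uf_super[OF u uf_int[OF u P S_in[OF assms]]]) auto
  qed
qed

end
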